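(* Let $\vec \theta \in \Lambda_0$. There are constants $c_{\{i,j\}}\in \{0, 1, \dots, g-1\}$, for $1 \leq i < j < k$, such that \[\vec \theta \equiv \sum_{1 \leq i < j < k} c_{\{i,j\}} \vec \alpha^{\{i,j\}} \pmod{2 \pi} \] (componentwise). Moreover, this representation of $\vec \theta$ is unique.
   Context: Let $g\ge 2$, $k\ge 2$ be integers, $\mathbb Z_g$ the integers mod $g$, and $d=\binom{k}{2}(g-1)$. Index the coordinates of $\mathbb R^d$ by pairs $(\{i,j\},a)$ with $1\le i<j\le k$ and $a\in\mathbb Z_g\setminus\{0\}$. Define $Z:(\mathbb Z_g)^k\to\mathbb R^d$ by $[Z(\vec x)]_{\{i,j\},a}=1-1/g$ if $x_i-x_j=a$ and $-1/g$ otherwise. Define $\Phi(\vec\theta)=\sum_{\vec x\in(\mathbb Z_g)^k} g^{-k}e^{i\vec\theta\cdot Z(\vec x)}$ for $\vec\theta\in\mathbb R^d$, $\Lambda=\{\vec\theta\in\mathbb R^d: |\Phi(\vec\theta)|=1\}$, and $\Lambda_0=\Lambda\cap[-\pi,\pi)^d$. Let $\mathbbm{1}_{\{i,j\},a}$ be the standard basis vector of $\mathbb R^d$ with a $1$ in coordinate $(\{i,j\},a)$. For $1\le i<j<k$ define \[ \vec \alpha^{\{i,j\}} = \sum_{n=1}^{g-1} \frac{2\pi n}{g} \mathbbm{1}_{\{i,j\},n}+ \sum_{n=1}^{g-1} \frac{2 \pi(g-n)}{g} \mathbbm{1}_{\{i,k\},n} + \sum_{n=1}^{g-1} \frac{2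 \pi n}{g} \mathbbm{1}_{\{j,k\},n},\] where $n$ is an integer in $[1,g-1]$ except in the subscripts, where it denotes the corresponding element of $\mathbb Z_g$. Congruence of vectors mod $2\pi$ means componentwise congruence. *)

theory Defs
  imports "HOL-Analysis.Analysis"
begin

text \<open>Coordinates of R^d are indexed by triples (i, j, a) with 1 \<le> i < j \<le> k and
  a \<in> {1..g-1} (representing the nonzero residues mod g).\<close>

definition idx :: "nat \<Rightarrow> nat \<Rightarrow> (nat \<times> nat \<times> nat) set" where
  "idx g k = {(i, j, a). 1 \<le> i \<and> i < j \<and> j \<le> k \<and> 1 \<le> a \<and> a \<le> g - 1}"

definition configs :: "nat \<Rightarrow> nat \<Rightarrow> (nat \<Rightarrow> nat) set" where
  "configs g k = PiE {1..k} (\<lambda>_. {0..<g})"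

definition Zvec :: "nat \<Rightarrow> nat \<Rightarrow> (nat \<Rightarrow> nat) \<Rightarrow> (nat \<times> nat \<times> nat) \<Rightarrow> real" where
  "Zvec g k x = (\<lambda>(i, j, a). if (i, j, a) \<in> idx g k then
       (if (int (x i) - int (x j)) mod int g = int a then 1 - 1 / real g else - 1 / real g)
     else 0)"

definition dotp :: "nat \<Rightarrow> nat \<Rightarrow> ((nat \<times> nat \<times> nat) \<Rightarrow> real) \<Rightarrow> ((nat \<times> nat \<times> nat) \<Rightarrow> real) \<Rightarrow> real" where
  "dotp g k u v = (\<Sum>c\<in>idx g k. u c * v c)"

definition Phi :: "nat \<Rightarrow> nat \<Rightarrow> ((nat \<times> nat \<times> nat) \<Rightarrow> real) \<Rightarrow> complex" where
  "Phi g k \<theta> = (\<Sum>x\<in>configs g k.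
      complex_of_real (1 / real g ^ k) * exp (\<i> * complex_of_real (dotp g k \<theta> (Zvec g k x))))"

definition Lambda0 :: "nat \<Rightarrow> nat \<Rightarrow> ((nat \<times> nat \<times> nat) \<Rightarrow> real) set" where
  "Lambda0 g k = {\<theta>. \<theta> \<in> extensional (idx g k) \<and>
      (\<forall>c\<in>idx g k. - pi \<le> \<theta> c \<and> \<theta> c < pi) \<and> cmod (Phi g k \<theta>) = 1}"

definition alpha :: "nat \<Rightarrow> nat \<Rightarrow> nat \<times> nat \<Rightarrow> (nat \<times> nat \<times> nat) \<Rightarrow> real" where
  "alpha g k p = (\<lambda>(i', j', a).
     if (i', j', a) \<notin> idx g k then 0
     else if (i', j') = (fst p, snd p) then 2 * pi * real a / real g
     else if (i', j') = (fst p, k) then 2 * pi * (real g - real a) / real g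
     else if (i', j') = (snd p, k) then 2 * pi * real a / real g
     else 0)"

definition pairs :: "nat \<Rightarrow> (nat \<times> nat) set" where
  "pairs k = {(i, j). 1 \<le> i \<and> i < j \<and> j < k}"

definition cong2pi :: "real \<Rightarrow> real \<Rightarrow> bool" where
  "cong2pi x y \<longleftrightarrow> (\<exists>m::int. x - y = 2 * pi * real_of_int m)"

end

theory Submission
  imports Defs
begin

definition Z2 :: "real \<Rightarrow> bool" where "Z2 r \<longleftrightarrow> (\<exists>m::int. r = 2*pi * of_int m)"

lemma Z2_0[simp]: "Z2 0" unfolding Z2_def by (rule exI[of _ 0]) simp
lemma Z2_add: "Z2 a \<Longrightarrow> Z2 b \<Longrightarrow> Z2 (a+b)"
  unfolding Z2_def by (metis distrib_left of_int_add)
lemma Z2_minus: "Z2 a \<Longrightarrow> Z2 (-a)"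
  unfolding Z2_def by (metis mult_minus_right of_int_minus)
lemma Z2_diff: "Z2 a \<Longrightarrow> Z2 b \<Longrightarrow> Z2 (a-b)"
  using Z2_add Z2_minus by (metis diff_conv_add_uminus)
lemma Z2_intmult: "Z2 a \<Longrightarrow> Z2 (of_int n * a)"
  unfolding Z2_def by (metis mult.left_commute of_int_mult)
lemma Z2_sum: "finite A \<Longrightarrow> (\<And>x. x\<in>A \<Longrightarrow> Z2 (f x)) \<Longrightarrow> Z2 (\<Sum>x\<in>A. f x)"
  by (induction A rule: finite_induct) (auto intro: Z2_add)
lemma cong2pi_Z2: "cong2pi x y \<longleftrightarrow> Z2 (x - y)"
  unfolding cong2pi_def Z2_def by simp

lemma Z2_div: assumes "g > 0" shows "Z2 (2*pi * of_int N / real g) \<longleftrightarrow> int g dvd N"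
proof
  assume "Z2 (2*pi * of_int N / real g)"
  then obtain m where "2*pi * of_int N / real g = 2*pi * of_int m" unfolding Z2_def by auto
  hence "of_int N = real g * of_int m" using assms pi_gt_zero by (auto simp: field_simps)
  hence "of_int N = (of_int (int g * m) :: real)" by simp
  hence "N = int g * m" by linarith
  thus "int g dvd N" by simp
next
  assume "int g dvd N"
  then obtain m where "N = int g * m" by auto
  thus "Z2 (2*pi * of_int N / real g)" unfolding Z2_def using assms by (intro exI[of _ m]) auto
qed

lemma unit_avg:
  fixes z :: "'a \<Rightarrow> complex" and w :: real
  assumes "finite A" "w > 0" "w * card A = 1" "\<forall>x\<in>A. cmod (z x) = 1"
    "cmod (\<Sum>x\<in>A. complex_of_real w * z x) = 1"
  shows "\<forall>x\<in>A. z x = (\<Sum>x\<in>A. complex_of_real w * z x)"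
proof
  define S where "S = (\<Sum>x\<in>A. complex_of_real w * z x)"
  have nS: "cmod S = 1" using assms(5) unfolding S_def .
  have SS: "S * cnj S = 1" using assms(5) complex_norm_square[of S] unfolding S_def by simp
  have e1: "S * cnj S = (\<Sum>x\<in>A. complex_of_real w * (z x * cnj S))"
    by (simp add: S_def sum_distrib_right mult.assoc)
  have "(\<Sum>x\<in>A. w * Re (z x * cnj S)) = Re (S * cnj S)"
    unfolding e1 Re_sum by simp
  hence "(\<Sum>x\<in>A. w * (1 - Re (z x * cnj S))) = 0"
    using SS assms(3) by (simp add: right_diff_distrib sum_subtractf mult.commute)
  moreover have nn: "\<forall>x\<in>A. 0 \<le> w * (1 - Re (z x * cnj S))"
  proof
    fix x assume "x\<in>A"
    have "cmod (z x * cnj S) = 1" using assms(4) \<open>x\<in>A\<close> nS by (simp add: norm_mult)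
    thus "0 \<le> w * (1 - Re (z x * cnj S))" using complex_Re_le_cmod[of "z x * cnj S"] assms(2) by simp
  qed
  ultimately have each: "\<forall>x\<in>A. w * (1 - Re (z x * cnj S)) = 0"
    using sum_nonneg_eq_0_iff[OF assms(1), of "\<lambda>x. w * (1 - Re (z x * cnj S))"] by auto
  fix x assume x: "x\<in>A"
  define u where "u = z x * cnj S"
  have Re1: "Re u = 1" using each x assms(2) unfolding u_def by simp
  have "cmod u = 1" using assms(4) x nS unfolding u_def by (simp add: norm_mult)
  hence "(Re u)^2 + (Im u)^2 = 1" by (metis cmod_power2 power_one)
  hence "Im u = 0" using Re1 by simp
  hence "u = 1" using Re1 by (simp add: complex_eq_iff)
  hence "z x * (cnj S * S) = S" unfolding u_def by (simp add: mult.assoc)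
  moreover have "cnj S * S = 1" using SS by (simp add: mult.commute)
  ultimately show "z x = S" by simp
qed

definition PP :: "nat \<Rightarrow> (nat\<times>nat) set" where "PP k = {(p,q). 1 \<le> p \<and> p < q \<and> q \<le> k}"
definition md :: "nat \<Rightarrow> int \<Rightarrow> nat" where "md g a = nat (a mod int g)"
definition th0 :: "nat \<Rightarrow> nat \<Rightarrow> ((nat \<times> nat \<times> nat) \<Rightarrow> real) \<Rightarrow> (nat \<times> nat \<times> nat) \<Rightarrow> real" where
  "th0 g k \<theta> c = (if c \<in> idx g k then \<theta> c else 0)"

definition FF :: "nat \<Rightarrow> nat \<Rightarrow> ((nat \<times> nat \<times> nat) \<Rightarrow> real) \<Rightarrow> (nat \<Rightarrow> int) \<Rightarrow> real" where
  "FF g k \<theta> h = (\<Sum>(p,q)\<in>PP k. th0 g k \<theta> (p,q,md g (h p - h q)))"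

lemma finite_PP[simp]: "finite (PP k)"
  by (rule finite_subset[of _ "{1..k}\<times>{1..k}"]) (auto simp: PP_def)

lemma finite_idx[simp]: "finite (idx g k)"
  by (rule finite_subset[of _ "{1..k}\<times>{1..k}\<times>{1..g}"]) (auto simp: idx_def)

lemma idx_eq: "idx g k = (\<lambda>((p,q),a). (p,q,a)) ` (SIGMA pq:PP k. {1..g-1})"
  unfolding idx_def PP_def by (auto simp: image_iff)

lemma conv:
  assumes g: "g \<ge> 2" and ext: "\<theta> \<in> extensional (idx g k)"
  shows "(\<Sum>c\<in>idx g k. \<theta> c * (if (h (fst c) - h (fst (snd c))) mod int g = int (snd (snd c)) then 1 else 0))
     = FF g k \<theta> h"
proof -
  have inj: "inj_on (\<lambda>((p::nat,q::nat),a::nat). (p,q,a)) (SIGMA pq:PP k. {1..g-1})"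
    by (auto simp: inj_on_def)
  have "(\<Sum>c\<in>idx g k. \<theta> c * (if (h (fst c) - h (fst (snd c))) mod int g = int (snd (snd c)) then 1 else 0))
     = (\<Sum>(pq,a)\<in>(SIGMA pq:PP k. {1..g-1}). \<theta> (fst pq, snd pq, a) *
          (if (h (fst pq) - h (snd pq)) mod int g = int a then 1 else 0))"
    unfolding idx_eq by (subst sum.reindex[OF inj]) (simp add: case_prod_beta)
  also have "\<dots> = (\<Sum>pq\<in>PP k. \<Sum>a\<in>{1..g-1}. \<theta> (fst pq, snd pq, a) *
          (if (h (fst pq) - h (snd pq)) mod int g = int a then 1 else 0))"
    by (rule sum.Sigma[symmetric]) auto
  also have "\<dots> = (\<Sum>pq\<in>PP k. th0 g k \<theta> (fst pq, snd pq, md g (h (fst pq) - h (snd pq))))"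
  proof (rule sum.cong[OF refl])
    fix pq assume "pq \<in> PP k"
    define r where "r = (h (fst pq) - h (snd pq)) mod int g"
    have r0: "0 \<le> r" "r < int g" using g unfolding r_def by auto
    have "(\<Sum>a\<in>{1..g-1}. \<theta> (fst pq, snd pq, a) * (if r = int a then 1 else 0))
       = (\<Sum>a\<in>{1..g-1}. if a = nat r then \<theta> (fst pq, snd pq, a) else 0)"
      using r0 by (intro sum.cong) auto
    also have "\<dots> = (if nat r \<in> {1..g-1} then \<theta> (fst pq, snd pq, nat r) else 0)"
      by (simp add: sum.delta')
    also have "\<dots> = th0 g k \<theta> (fst pq, snd pq, nat r)"
      using \<open>pq \<in> PP k\<close> r0 by (auto simp: th0_def idx_def PP_def)
    finally show "(\<Sum>a\<in>{1..g-1}. \<theta> (fst pq, snd pq, a) *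
          (if (h (fst pq) - h (snd pq)) mod int g = int a then 1 else 0))
          = th0 g k \<theta> (fst pq, snd pq, md g (h (fst pq) - h (snd pq)))"
      unfolding r_def md_def by simp
  qed
  also have "\<dots> = FF g k \<theta> h" unfolding FF_def by (simp add: case_prod_beta)
  finally show ?thesis .
qed

lemma dotp_Zvec:
  assumes g: "g \<ge> 2" and ext: "\<theta> \<in> extensional (idx g k)"
  shows "dotp g k \<theta> (Zvec g k x) = FF g k \<theta> (\<lambda>m. int (x m)) - (\<Sum>c\<in>idx g k. \<theta> c) / real g"
proof -
  have "dotp g k \<theta> (Zvec g k x) = (\<Sum>c\<in>idx g k. \<theta> c * (if (int (x (fst c)) - int (x (fst (snd c)))) mod int g = int (snd (snd c)) then 1 else 0) - \<theta> c / real g)"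
    unfolding dotp_def Zvec_def by (intro sum.cong) (auto simp: case_prod_beta algebra_simps)
  also have "\<dots> = FF g k \<theta> (\<lambda>m. int (x m)) - (\<Sum>c\<in>idx g k. \<theta> c) / real g"
    by (simp add: sum_subtractf sum_divide_distrib conv[OF g ext, where h="\<lambda>m. int (x m)"])
  finally show ?thesis .
qed

lemma H:
  assumes g: "g \<ge> 2" and th: "\<theta> \<in> Lambda0 g k" and hb: "\<forall>m. 0 \<le> h m \<and> h m < int g"
  shows "Z2 (FF g k \<theta> h)"
proof -
  have ext: "\<theta> \<in> extensional (idx g k)" using th by (simp add: Lambda0_def)
  define A where "A = configs g k"
  define w :: real where "w = 1 / real g ^ k"
  define z where "z x = exp (\<i> * complex_of_real (dotp g k \<theta> (Zvec g k x)))" for x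
  have fA: "finite A" unfolding A_def configs_def by (simp add: finite_PiE)
  have cA: "card A = g ^ k" unfolding A_def configs_def by (simp add: card_PiE)
  have w0: "w > 0" using g unfolding w_def by simp
  have wA: "w * card A = 1" using g unfolding w_def cA by simp
  have nz: "\<forall>x\<in>A. cmod (z x) = 1" unfolding z_def by simp
  have PhiA: "Phi g k \<theta> = (\<Sum>x\<in>A. complex_of_real w * z x)"
    unfolding Phi_def A_def w_def z_def by simp
  have nPhi: "cmod (\<Sum>x\<in>A. complex_of_real w * z x) = 1" using th PhiA by (simp add: Lambda0_def)
  have allS: "\<forall>x\<in>A. z x = (\<Sum>x\<in>A. complex_of_real w * z x)"
    by (rule unit_avg[OF fA w0 wA nz nPhi])
  define x0 :: "nat \<Rightarrow> nat" where "x0 = restrict (\<lambda>_. 0) {1..k}"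
  define x1 :: "nat \<Rightarrow> nat" where "x1 = restrict (\<lambda>m. nat (h m)) {1..k}"
  have x0A: "x0 \<in> A" unfolding x0_def A_def configs_def using g by auto
  have x1A: "x1 \<in> A" unfolding x1_def A_def configs_def using hb
    by (auto simp: PiE_iff) (metis nat_less_iff)
  have F0: "FF g k \<theta> (\<lambda>m. int (x0 m)) = 0"
    unfolding FF_def
  proof (rule sum.neutral, safe)
    fix p q assume "(p,q) \<in> PP k"
    hence "x0 p = 0" "x0 q = 0" unfolding x0_def PP_def by auto
    moreover have "(p,q,0) \<notin> idx g k" by (simp add: idx_def)
    ultimately show "th0 g k \<theta> (p, q, md g (int (x0 p) - int (x0 q))) = 0"
      by (simp add: md_def th0_def)
  qed
  have F1: "FF g k \<theta> (\<lambda>m. int (x1 m)) = FF g k \<theta> h"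
    unfolding FF_def
  proof (rule sum.cong[OF refl], safe)
    fix p q assume "(p,q) \<in> PP k"
    hence "int (x1 p) = h p" "int (x1 q) = h q" unfolding x1_def PP_def using hb by auto
    thus "th0 g k \<theta> (p, q, md g (int (x1 p) - int (x1 q))) = th0 g k \<theta> (p, q, md g (h p - h q))" by simp
  qed
  define K where "K = (\<Sum>c\<in>idx g k. \<theta> c) / real g"
  have za: "z x1 = (\<Sum>x\<in>A. complex_of_real w * z x)" using allS x1A by blast
  have zb: "z x0 = (\<Sum>x\<in>A. complex_of_real w * z x)" using allS x0A by blast
  have "z x1 = z x0" using za zb by simp
  hence "exp (\<i> * complex_of_real (FF g k \<theta> h - K)) = exp (\<i> * complex_of_real (0 - K))"
    unfolding z_def dotp_Zvec[OF g ext] F0 F1 K_def .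
  hence E: "exp (\<i> * complex_of_real (FF g k \<theta> h - K)) = exp (\<i> * complex_of_real (0 - K))" .
  have "exp (\<i> * complex_of_real (FF g k \<theta> h - K) - \<i> * complex_of_real (0 - K))
      = exp (\<i> * complex_of_real (FF g k \<theta> h - K)) / exp (\<i> * complex_of_real (0 - K))"
    by (rule exp_diff)
  also have "\<dots> = 1" using E by simp
  also have "\<i> * complex_of_real (FF g k \<theta> h - K) - \<i> * complex_of_real (0 - K)
      = \<i> * complex_of_real (FF g k \<theta> h)" by (simp add: algebra_simps)
  finally have "exp (\<i> * complex_of_real (FF g k \<theta> h)) = 1" .
  then obtain n :: int where "FF g k \<theta> h = of_int (2*n) * pi" by (auto simp: exp_eq_1)
  thus ?thesis unfolding Z2_def by (intro exI[of _ n]) simp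
qed


lemma md_mod[simp]: "md g (x mod int g) = md g x" unfolding md_def by simp

lemma second_diff:
  assumes ij: "(i,j) \<in> PP k"
  defines "hh \<equiv> \<lambda>a b. (\<lambda>m::nat. if m = i then a else if m = j then (b::int) else 0)"
  shows "FF g k \<theta> (hh a b) - FF g k \<theta> (hh a 0) - FF g k \<theta> (hh 0 b) + FF g k \<theta> (hh 0 0)
       = th0 g k \<theta> (i,j,md g (a - b)) - th0 g k \<theta> (i,j,md g a) - th0 g k \<theta> (i,j,md g (-b))
         + th0 g k \<theta> (i,j,md g 0)"
proof -
  define T where "T h pq = th0 g k \<theta> (fst pq, snd pq, md g (h (fst pq) - h (snd pq)))" for h pq
  have FFT: "FF g k \<theta> h = (\<Sum>pq\<in>PP k. T h pq)" for h
    unfolding FF_def T_def by (simp add: case_prod_beta)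
  have ilj: "i < j" using ij by (simp add: PP_def)
  have "FF g k \<theta> (hh a b) - FF g k \<theta> (hh a 0) - FF g k \<theta> (hh 0 b) + FF g k \<theta> (hh 0 0)
     = (\<Sum>pq\<in>PP k. T (hh a b) pq - T (hh a 0) pq - T (hh 0 b) pq + T (hh 0 0) pq)"
    unfolding FFT by (simp add: sum_subtractf sum.distrib)
  also have "\<dots> = (\<Sum>pq\<in>PP k. if pq = (i,j) then
        T (hh a b) (i,j) - T (hh a 0) (i,j) - T (hh 0 b) (i,j) + T (hh 0 0) (i,j) else 0)"
  proof (rule sum.cong[OF refl])
    fix pq assume pq: "pq \<in> PP k"
    obtain p q where pqe: "pq = (p,q)" by force
    have pq': "p < q" using pq pqe by (simp add: PP_def)
    show "T (hh a b) pq - T (hh a 0) pq - T (hh 0 b) pq + T (hh 0 0) pq = (if pq = (i,j) then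
        T (hh a b) (i,j) - T (hh a 0) (i,j) - T (hh 0 b) (i,j) + T (hh 0 0) (i,j) else 0)"
    proof (cases "pq = (i,j)")
      case False
      then consider "p \<noteq> j \<and> q \<noteq> j" | "p \<noteq> i \<and> q \<noteq> i" using pqe pq' ilj by force
      then show ?thesis
        by cases (use False ilj in \<open>auto simp: T_def hh_def pqe\<close>)
    qed simp
  qed
  also have "\<dots> = T (hh a b) (i,j) - T (hh a 0) (i,j) - T (hh 0 b) (i,j) + T (hh 0 0) (i,j)"
    using ij by (simp add: sum.delta)
  also have "\<dots> = th0 g k \<theta> (i,j,md g (a - b)) - th0 g k \<theta> (i,j,md g a) - th0 g k \<theta> (i,j,md g (-b))
         + th0 g k \<theta> (i,j,md g 0)"
    using ilj by (simp add: T_def hh_def)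
  finally show ?thesis .
qed

lemma linear:
  assumes g: "g \<ge> 2" and ij: "(i,j) \<in> PP k"
    and HH: "\<And>h. \<forall>m. 0 \<le> h m \<and> h m < int g \<Longrightarrow> Z2 (FF g k \<theta> h)"
  shows "\<exists>e::int. \<forall>a<g. Z2 (th0 g k \<theta> (i,j,a) - 2*pi*real a * of_int e / real g)"
proof -
  define \<phi> where "\<phi> x = th0 g k \<theta> (i,j,md g x)" for x
  have phi0: "\<phi> 0 = 0" unfolding \<phi>_def th0_def idx_def md_def by simp
  have phimod: "\<phi> (x mod int g) = \<phi> x" for x unfolding \<phi>_def by simp
  define hh where "hh = (\<lambda>a b. (\<lambda>m::nat. if m = i then a else if m = j then (b::int) else 0))"
  have A: "Z2 (\<phi> (a - b) - \<phi> a - \<phi> (-b))" if "0 \<le> a" "a < int g" "0 \<le> b" "b < int g" for a b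
  proof -
    have b1: "\<forall>m. 0 \<le> hh x y m \<and> hh x y m < int g" if "0 \<le> x" "x < int g" "0 \<le> y" "y < int g" for x y
      using that g unfolding hh_def by auto
    have "Z2 (FF g k \<theta> (hh a b) - FF g k \<theta> (hh a 0) - FF g k \<theta> (hh 0 b) + FF g k \<theta> (hh 0 0))"
      using g that by (intro Z2_add Z2_diff HH b1) auto
    thus ?thesis using second_diff[OF ij, of g \<theta> a b] phi0 unfolding \<phi>_def hh_def by simp
  qed
  have B: "Z2 (\<phi> (x + y) - \<phi> x - \<phi> y)" for x y
  proof -
    have g0: "int g > 0" using g by simp
    have "Z2 (\<phi> (x mod int g - (-y) mod int g) - \<phi> (x mod int g) - \<phi> (- ((-y) mod int g)))"
      by (rule A) (use g0 in auto)
    moreover have "\<phi> (x mod int g - (-y) mod int g) = \<phi> (x + y)"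
    proof -
      have "(x mod int g - (-y) mod int g) mod int g = (x + y) mod int g"
        using mod_diff_eq[of x "int g" "-y"] by simp
      thus ?thesis using phimod[of "x mod int g - (-y) mod int g"] phimod[of "x+y"] by simp
    qed
    moreover have "\<phi> (- ((-y) mod int g)) = \<phi> y"
    proof -
      have "(- ((-y) mod int g)) mod int g = y mod int g"
        using mod_minus_eq[of "-y" "int g"] by simp
      thus ?thesis using phimod[of "- ((-y) mod int g)"] phimod[of "y"] by simp
    qed
    ultimately show ?thesis by (simp add: phimod)
  qed
  have C: "Z2 (\<phi> (int n) - real n * \<phi> 1)" for n :: nat
  proof (induction n)
    case 0 then show ?case by (simp add: phi0)
  next
    case (Suc n)
    have "Z2 ((\<phi> (int n + 1) - \<phi> (int n) - \<phi> 1) + (\<phi> (int n) - real n * \<phi> 1))"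
      using B Suc Z2_add by blast
    thus ?case by (simp add: algebra_simps)
  qed
  have "\<phi> (int g) = 0" using phimod[of "int g"] phi0 by simp
  hence "Z2 (- (real g * \<phi> 1))" using C[of g] by simp
  hence "Z2 (real g * \<phi> 1)" using Z2_minus by fastforce
  then obtain m where m: "real g * \<phi> 1 = 2*pi * of_int m" unfolding Z2_def by auto
  have phi1: "\<phi> 1 = 2*pi * of_int m / real g" using m g by (simp add: field_simps)
  show ?thesis
  proof (intro exI allI impI)
    fix a assume "a < g"
    hence "th0 g k \<theta> (i,j,a) = \<phi> (int a)" unfolding \<phi>_def md_def by simp
    thus "Z2 (th0 g k \<theta> (i,j,a) - 2*pi*real a * of_int m / real g)"
      using C[of a] phi1 by (simp add: field_simps)
  qed
qed


lemma int_md: "g > 0 \<Longrightarrow> int (md g x) = x mod int g" unfolding md_def by simp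

lemma dvd_mod_diff: "int g dvd (x mod int g - x)"
proof -
  have "x mod int g - x = - (int g * (x div int g))" using minus_mult_div_eq_mod[of x "int g"] by simp
  thus ?thesis by simp
qed

lemma rel:
  assumes g: "g \<ge> 2"
    and HH: "\<And>h. \<forall>m. 0 \<le> h m \<and> h m < int g \<Longrightarrow> Z2 (FF g k \<theta> h)"
    and E: "\<forall>pq\<in>PP k. \<forall>a<g. Z2 (th0 g k \<theta> (fst pq, snd pq, a) - 2*pi*real a * of_int (e pq) / real g)"
  shows "int g dvd (\<Sum>pq\<in>PP k. ((if fst pq = i then 1 else 0) - (if snd pq = i then 1 else 0)) * e pq)"
proof -
  define d :: "nat \<Rightarrow> int" where "d m = (if m = i then 1 else 0)" for m
  have g0: "g > 0" using g by simp
  have "Z2 (FF g k \<theta> d)" using g by (intro HH) (auto simp: d_def)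
  moreover have "Z2 (\<Sum>pq\<in>PP k. th0 g k \<theta> (fst pq, snd pq, md g (d (fst pq) - d (snd pq)))
       - 2*pi*real (md g (d (fst pq) - d (snd pq))) * of_int (e pq) / real g)"
  proof (rule Z2_sum)
    fix pq assume "pq \<in> PP k"
    moreover have "md g (d (fst pq) - d (snd pq)) < g" unfolding md_def using g0
      by (simp add: nat_less_iff)
    ultimately show "Z2 (th0 g k \<theta> (fst pq, snd pq, md g (d (fst pq) - d (snd pq)))
       - 2*pi*real (md g (d (fst pq) - d (snd pq))) * of_int (e pq) / real g)" using E by blast
  qed simp
  ultimately have "Z2 (FF g k \<theta> d - (\<Sum>pq\<in>PP k. th0 g k \<theta> (fst pq, snd pq, md g (d (fst pq) - d (snd pq)))
       - 2*pi*real (md g (d (fst pq) - d (snd pq))) * of_int (e pq) / real g))" by (rule Z2_diff)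
  also have "FF g k \<theta> d - (\<Sum>pq\<in>PP k. th0 g k \<theta> (fst pq, snd pq, md g (d (fst pq) - d (snd pq)))
       - 2*pi*real (md g (d (fst pq) - d (snd pq))) * of_int (e pq) / real g)
     = (\<Sum>pq\<in>PP k. 2*pi*real (md g (d (fst pq) - d (snd pq))) * of_int (e pq) / real g)"
    unfolding FF_def by (simp add: case_prod_beta sum_subtractf)
  also have "\<dots> = (\<Sum>pq\<in>PP k. (2*pi / real g) * of_int (int (md g (d (fst pq) - d (snd pq))) * e pq))"
    by (intro sum.cong refl) simp
  also have "\<dots> = (2*pi / real g) * (\<Sum>pq\<in>PP k. of_int (int (md g (d (fst pq) - d (snd pq))) * e pq))"
    by (rule sum_distrib_left[symmetric])
  also have "\<dots> = 2*pi* of_int (\<Sum>pq\<in>PP k. int (md g (d (fst pq) - d (snd pq))) * e pq) / real g"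
    by (simp only: of_int_sum) simp
  finally have "int g dvd (\<Sum>pq\<in>PP k. int (md g (d (fst pq) - d (snd pq))) * e pq)"
    using Z2_div g0 by blast
  moreover have "int g dvd (\<Sum>pq\<in>PP k. int (md g (d (fst pq) - d (snd pq))) * e pq)
       - (\<Sum>pq\<in>PP k. (d (fst pq) - d (snd pq)) * e pq)"
    unfolding sum_subtractf[symmetric] int_md[OF g0] left_diff_distrib[symmetric]
    by (intro dvd_sum dvd_mult2 dvd_mod_diff)
  ultimately have "int g dvd (\<Sum>pq\<in>PP k. int (md g (d (fst pq) - d (snd pq))) * e pq) -
       ((\<Sum>pq\<in>PP k. int (md g (d (fst pq) - d (snd pq))) * e pq)
       - (\<Sum>pq\<in>PP k. (d (fst pq) - d (snd pq)) * e pq))"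
    by (rule dvd_diff)
  hence "int g dvd (\<Sum>pq\<in>PP k. (d (fst pq) - d (snd pq)) * e pq)" by simp
  thus ?thesis unfolding d_def .
qed


lemma finite_pairs[simp]: "finite (pairs k)"
  by (rule finite_subset[of _ "{1..k}\<times>{1..k}"]) (auto simp: pairs_def)

lemma alpha_lt:
  assumes "(i,j,a) \<in> idx g k" "j < k" "p \<in> pairs k"
  shows "alpha g k p (i,j,a) = (if p = (i,j) then 2*pi*real a / real g else 0)"
  using assms by (cases p) (auto simp: alpha_def pairs_def)

lemma alpha_k:
  assumes "(i,k,a) \<in> idx g k" "p \<in> pairs k"
  shows "alpha g k p (i,k,a) = 2*pi/real g * of_int (if fst p = i then int g - int a
            else if snd p = i then int a else 0)"
  using assms by (cases p) (auto simp: alpha_def pairs_def idx_def of_nat_diff)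

lemma sum_lt:
  assumes "(i,j,a) \<in> idx g k" "j < k"
  shows "(\<Sum>p\<in>pairs k. real (c p) * alpha g k p (i,j,a)) = real (c (i,j)) * (2*pi*real a / real g)"
proof -
  have ij: "(i,j) \<in> pairs k" using assms by (auto simp: idx_def pairs_def)
  have "(\<Sum>p\<in>pairs k. real (c p) * alpha g k p (i,j,a))
      = (\<Sum>p\<in>pairs k. if p = (i,j) then real (c (i,j)) * (2*pi*real a / real g) else 0)"
    using assms by (intro sum.cong) (auto simp: alpha_lt)
  also have "\<dots> = real (c (i,j)) * (2*pi*real a / real g)" using ij by (simp add: sum.delta)
  finally show ?thesis .
qed

lemma sum_k:
  assumes "(i,k,a) \<in> idx g k"
  shows "(\<Sum>p\<in>pairs k. real (c p) * alpha g k p (i,k,a)) = 2*pi* of_int (\<Sum>p\<in>pairs k. int (c p) *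
     (if fst p = i then int g - int a else if snd p = i then int a else 0)) / real g"
proof -
  have "(\<Sum>p\<in>pairs k. real (c p) * alpha g k p (i,k,a)) = (\<Sum>p\<in>pairs k. 2*pi/real g * of_int (int (c p) *
     (if fst p = i then int g - int a else if snd p = i then int a else 0)))"
    using assms by (intro sum.cong) (auto simp: alpha_k)
  also have "\<dots> = 2*pi* of_int (\<Sum>p\<in>pairs k. int (c p) *
     (if fst p = i then int g - int a else if snd p = i then int a else 0)) / real g"
    by (simp only: of_int_sum sum_distrib_left[symmetric]) simp
  finally show ?thesis .
qed

lemma PP_split: "PP k = pairs k \<union> (\<lambda>q. (q,k)) ` {1..<k}"
  unfolding PP_def pairs_def by auto


lemma term_dvd:
  assumes g0: "g > 0" and p: "p \<in> pairs k"
  shows "int g dvd (int (nat (e mod int g)) * (if fst p = i then int g - int a else if snd p = i then int a else 0)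
           + int a * ((if fst p = i then 1 else 0) - (if snd p = i then 1 else 0)) * e)"
proof -
  have r: "int (nat (e mod int g)) = e - int g * (e div int g)"
    using g0 by (simp add: minus_mult_div_eq_mod)
  have fs: "fst p < snd p" using p by (auto simp: pairs_def)
  show ?thesis
  proof (cases "fst p = i")
    case True
    hence "snd p \<noteq> i" using fs by auto
    thus ?thesis using True unfolding r
      by (simp add: algebra_simps)
  next
    case False
    show ?thesis
    proof (cases "snd p = i")
      case True
      thus ?thesis using False unfolding r by (simp add: algebra_simps)
    qed (use False in simp)
  qed
qed


theorem lemma2p9:
  fixes g k :: nat and \<theta> :: "(nat \<times> nat \<times> nat) \<Rightarrow> real"
  assumes "g \<ge> 2" and "k \<ge> 2" and "\<theta> \<in> Lambda0 g k"
  shows "\<exists>!c. c \<in> PiE (pairs k) (\<lambda>_. {0..<g}) \<and>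
     (\<forall>t\<in>idx g k. cong2pi (\<theta> t) (\<Sum>p\<in>pairs k. real (c p) * alpha g k p t))"
proof -
  have g: "g \<ge> 2" by fact
  have g0: "g > 0" using g by simp
  have th0eq: "\<And>t. t \<in> idx g k \<Longrightarrow> th0 g k \<theta> t = \<theta> t" by (simp add: th0_def)
  have HH: "\<And>h. \<forall>m. 0 \<le> h m \<and> h m < int g \<Longrightarrow> Z2 (FF g k \<theta> h)"
    using H[OF g assms(3)] by blast
  have "\<forall>pq\<in>PP k. \<exists>e::int. \<forall>a<g. Z2 (th0 g k \<theta> (fst pq, snd pq, a) - 2*pi*real a * of_int e / real g)"
    using linear[OF g _ HH] by simp
  from bchoice[OF this] obtain e where E: "\<forall>pq\<in>PP k. \<forall>a<g. Z2 (th0 g k \<theta> (fst pq, snd pq, a) - 2*pi*real a * of_int (e pq) / real g)"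
    by blast
  note R = rel[OF g HH E]
  define c where "c = restrict (\<lambda>p. nat (e p mod int g)) (pairs k)"
  have cP: "c \<in> PiE (pairs k) (\<lambda>_. {0..<g})"
    unfolding c_def using g0 by (auto simp: nat_less_iff)
  have coord: "cong2pi (\<theta> t) (\<Sum>p\<in>pairs k. real (c p) * alpha g k p t)" if t: "t \<in> idx g k" for t
  proof -
    obtain i j a where tt: "t = (i,j,a)" by (cases t) auto
    have ij: "1 \<le> i" "i < j" "j \<le> k" "1 \<le> a" "a \<le> g - 1" using t tt by (auto simp: idx_def)
    have PPij: "(i,j) \<in> PP k" using ij by (simp add: PP_def)
    have alg: "a < g" using ij g by linarith
    have Eij: "Z2 (\<theta> t - 2*pi*real a * of_int (e (i,j)) / real g)"
    proof -
      have "Z2 (th0 g k \<theta> (i,j,a) - 2*pi*real a * of_int (e (i,j)) / real g)"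
        using bspec[OF E PPij] alg by simp
      moreover have "th0 g k \<theta> (i,j,a) = \<theta> t" using th0eq[OF t] tt by simp
      ultimately show ?thesis by simp
    qed
    show ?thesis
    proof (cases "j < k")
      case True
      have cij: "int (c (i,j)) = e (i,j) - int g * (e (i,j) div int g)"
        using ij True g0 by (simp add: c_def pairs_def minus_mult_div_eq_mod)
      have "Z2 (2*pi* of_int (int a * (e (i,j) div int g)))" unfolding Z2_def by blast
      also have "2*pi* of_int (int a * (e (i,j) div int g)) =
          2*pi*real a * of_int (e (i,j)) / real g - real (c (i,j)) * (2*pi*real a / real g)"
      proof -
        have h: "of_int (e (i,j)) = real (c (i,j)) + real g * of_int (e (i,j) div int g)"
        proof -
          have "e (i,j) = int (c (i,j)) + int g * (e (i,j) div int g)" using cij by simp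
          from arg_cong[OF this, of real_of_int] show ?thesis by simp
        qed
        show ?thesis using g0 by (subst h) (simp add: field_simps)
      qed
      finally have "Z2 ((\<theta> t - 2*pi*real a * of_int (e (i,j)) / real g) +
          (2*pi*real a * of_int (e (i,j)) / real g - real (c (i,j)) * (2*pi*real a / real g)))"
        using Eij Z2_add by blast
      thus ?thesis unfolding cong2pi_Z2 tt sum_lt[OF t[unfolded tt] True] by simp
    next
      case False
      hence jk: "j = k" using ij by simp
      define w where "w p = (if fst p = i then int g - int a else if snd p = i then int a else 0)" for p
      define dd where "dd p = (if fst p = i then 1 else 0) - (if snd p = i then 1 else (0::int))" for p :: "nat\<times>nat"
      define N where "N = int a * e (i,k) - (\<Sum>p\<in>pairs k. int (c p) * w p)"
      have Rs: "(\<Sum>pq\<in>PP k. dd pq * e pq) = (\<Sum>p\<in>pairs k. dd p * e p) + e (i,k)"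
      proof -
        have disj: "pairs k \<inter> (\<lambda>q. (q,k)) ` {1..<k} = {}" by (auto simp: pairs_def)
        have inj: "inj_on (\<lambda>q. (q,k)) {1..<k}" by (auto simp: inj_on_def)
        have "(\<Sum>pq\<in>(\<lambda>q. (q,k)) ` {1..<k}. dd pq * e pq) = (\<Sum>q\<in>{1..<k}. dd (q,k) * e (q,k))"
          using sum.reindex[OF inj, of "\<lambda>pq. dd pq * e pq"] by (simp add: comp_def)
        also have "\<dots> = (\<Sum>q\<in>{1..<k}. if q = i then e (i,k) else 0)"
          using ij jk by (intro sum.cong) (auto simp: dd_def)
        also have "\<dots> = e (i,k)" using ij jk by simp
        finally show ?thesis unfolding PP_split by (subst sum.union_disjoint) (use disj in auto)
      qed
      have "int g dvd N - int a * (\<Sum>pq\<in>PP k. dd pq * e pq)"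
      proof -
        have "N - int a * (\<Sum>pq\<in>PP k. dd pq * e pq) =
            - (\<Sum>p\<in>pairs k. int (c p) * w p + int a * dd p * e p)"
          unfolding N_def Rs by (simp add: sum.distrib sum_distrib_left algebra_simps)
        also have "int g dvd \<dots>"
        proof (subst dvd_minus_iff, rule dvd_sum)
          fix p assume p: "p \<in> pairs k"
          thus "int g dvd int (c p) * w p + int a * dd p * e p"
            using term_dvd[OF g0 p, of "e p" i a] unfolding c_def w_def dd_def by simp
        qed
        finally show ?thesis .
      qed
      moreover have "int g dvd int a * (\<Sum>pq\<in>PP k. dd pq * e pq)"
        by (rule dvd_mult) (use R in \<open>simp add: dd_def\<close>)
      ultimately have "int g dvd (N - int a * (\<Sum>pq\<in>PP k. dd pq * e pq)) + int a * (\<Sum>pq\<in>PP k. dd pq * e pq)"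
        by (rule dvd_add)
      hence "int g dvd N" by simp
      hence "Z2 (2*pi* of_int N / real g)" using Z2_div g0 by blast
      hence "Z2 ((\<theta> t - 2*pi*real a * of_int (e (i,j)) / real g) + 2*pi* of_int N / real g)"
        using Eij Z2_add by blast
      moreover have "(\<theta> t - 2*pi*real a * of_int (e (i,j)) / real g) + 2*pi* of_int N / real g
          = \<theta> t - (\<Sum>p\<in>pairs k. real (c p) * alpha g k p t)"
        unfolding tt jk sum_k[OF t[unfolded tt jk]] N_def w_def[symmetric]
        using g0 by (simp add: field_simps)
      ultimately show ?thesis unfolding cong2pi_Z2 by simp
    qed
  qed
  show ?thesis
  proof (rule ex1I[where a=c])
    show "c \<in> PiE (pairs k) (\<lambda>_. {0..<g}) \<and>
     (\<forall>t\<in>idx g k. cong2pi (\<theta> t) (\<Sum>p\<in>pairs k. real (c p) * alpha g k p t))"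
      using cP coord by blast
  next
    fix c' assume c': "c' \<in> PiE (pairs k) (\<lambda>_. {0..<g}) \<and>
     (\<forall>t\<in>idx g k. cong2pi (\<theta> t) (\<Sum>p\<in>pairs k. real (c' p) * alpha g k p t))"
    show "c' = c"
    proof (rule PiE_ext)
      show "c' \<in> PiE (pairs k) (\<lambda>_. {0..<g})" using c' by blast
      show "c \<in> PiE (pairs k) (\<lambda>_. {0..<g})" by (rule cP)
      fix p assume p: "p \<in> pairs k"
      obtain i j where pe: "p = (i,j)" by force
      have t: "(i,j,1) \<in> idx g k" using p pe g by (auto simp: pairs_def idx_def)
      have jk: "j < k" using p pe by (auto simp: pairs_def)
      have A: "Z2 (\<theta> (i,j,1) - real (c p) * (2*pi*real 1 / real g))"
        using coord[OF t] unfolding cong2pi_Z2 sum_lt[OF t jk] pe .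
      have "cong2pi (\<theta> (i,j,1)) (\<Sum>q\<in>pairs k. real (c' q) * alpha g k q (i,j,1))"
        using c' t by blast
      hence B: "Z2 (\<theta> (i,j,1) - real (c' p) * (2*pi*real 1 / real g))"
        unfolding cong2pi_Z2 sum_lt[OF t jk] pe .
      have "Z2 ((\<theta> (i,j,1) - real (c p) * (2*pi*real 1 / real g)) - (\<theta> (i,j,1) - real (c' p) * (2*pi*real 1 / real g)))"
        by (rule Z2_diff[OF A B])
      moreover have "(\<theta> (i,j,1) - real (c p) * (2*pi*real 1 / real g)) - (\<theta> (i,j,1) - real (c' p) * (2*pi*real 1 / real g))
         = 2*pi* of_int (int (c' p) - int (c p)) / real g" by (simp add: algebra_simps diff_divide_distrib)
      ultimately have "Z2 (2*pi* of_int (int (c' p) - int (c p)) / real g)" by simp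
      hence "int g dvd int (c' p) - int (c p)" using Z2_div g0 by blast
      moreover have "c p < g" "c' p < g" using cP c' p by auto
      ultimately show "c' p = c p"
      proof (rule_tac ccontr)
        assume dv: "int g dvd int (c' p) - int (c p)" and b: "c p < g" "c' p < g" and ne: "c' p \<noteq> c p"
        hence "int (c' p) - int (c p) \<noteq> 0" by simp
        from dvd_imp_le_int[OF this dv] have "int g \<le> \<bar>int (c' p) - int (c p)\<bar>" by simp
        with b show False by linarith
      qed
    qed
  qed
qed

end
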